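(* Let $\sigma$ be an implicit signature, $\mathsf V$ a pseudovariety of finite semigroups, $X$ a finite alphabet, and $\mathcal C$ the closure under union, product and iteration ($Y\mapsto Y^+$) of some set of finite subsets of $\Omega^\sigma_X\mathsf S$. Suppose the Pin-Reutenauer procedure holds for $\mathcal C$ over $\mathsf V$, i.e. for all $K,L\in\mathcal C$, with closures taken in $\Omega^\sigma_X\mathsf V$, $$\overline{p_{\mathsf V}(K)p_{\mathsf V}(L)}=\overline{p_{\mathsf V}(K)}\;\overline{p_{\mathsf V}(L)}\quad\text{and}\quad\overline{p_{\mathsf V}(L)^+}=\langle\overline{p_{\mathsf V}(L)}\rangle_\sigma.$$ Then $\mathsf V$ is full with respect to $\mathcal C$: for every $L\in\mathcal C$, $p_{\mathsf V}(\overline{L}^{\,\mathsf S})=\overline{p_{\mathsf V}(L)}$, where $\overline{L}^{\,\mathsf S}$ is the closure of $L$ in $\Omega^\sigma_X\mathsf S$ and the right side is the closure in $\Omega^\sigma_X\mathsf V$.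
   Context: $\overline{\Omega}_X\mathsf V$ is the free pro-$\mathsf V$ semigroup on $X$ and $\mathsf S$ the pseudovariety of all finite semigroups. An implicit signature is a set of implicit operations of finite arity containing binary multiplication; $\Omega^\sigma_X\mathsf V$ is the subalgebra of $\overline{\Omega}_X\mathsf V$ generated by $X$ under the operations of $\sigma$, with the induced topology. $p_{\mathsf V}:\overline{\Omega}_X\mathsf S\to\overline{\Omega}_X\mathsf V$ is the natural continuous homomorphism (it maps $\Omega^\sigma_X\mathsf S$ onto $\Omega^\sigma_X\mathsf V$). $\langle U\rangle_\sigma$ is the $\sigma$-subalgebra generated by $U$. *)

theory Defs
  imports Main
begin

text \<open>Finite semigroups are represented with carriers inside nat (every finite
semigroup is isomorphic to one of these); a pseudovariety is a class of such
representations closed under subsemigroups, homomorphic images (hence isomorphic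
copies) and finite direct products.\<close>

type_synonym sgr = "nat set \<times> (nat \<Rightarrow> nat \<Rightarrow> nat)"

definition carr :: "sgr \<Rightarrow> nat set" where "carr S = fst S"
definition smult :: "sgr \<Rightarrow> nat \<Rightarrow> nat \<Rightarrow> nat" where "smult S = snd S"

definition fin_sgr :: "sgr \<Rightarrow> bool" where
  "fin_sgr S \<longleftrightarrow> finite (carr S) \<and> carr S \<noteq> {} \<and>
     (\<forall>a\<in>carr S. \<forall>b\<in>carr S. smult S a b \<in> carr S) \<and>
     (\<forall>a\<in>carr S. \<forall>b\<in>carr S. \<forall>c\<in>carr S.
        smult S (smult S a b) c = smult S a (smult S b c))"

definition sg_hom :: "sgr \<Rightarrow> sgr \<Rightarrow> (nat \<Rightarrow> nat) \<Rightarrow> bool" where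
  "sg_hom S T h \<longleftrightarrow> h ` carr S \<subseteq> carr T \<and>
     (\<forall>a\<in>carr S. \<forall>b\<in>carr S. h (smult S a b) = smult T (h a) (h b))"

definition pseudovariety :: "sgr set \<Rightarrow> bool" where
  "pseudovariety V \<longleftrightarrow>
     (\<forall>S\<in>V. fin_sgr S) \<and>
     ({0}, \<lambda>_ _. 0) \<in> V \<and>
     (\<forall>S\<in>V. \<forall>B. B \<noteq> {} \<and> B \<subseteq> carr S \<and> (\<forall>a\<in>B. \<forall>b\<in>B. smult S a b \<in> B)
          \<longrightarrow> (B, smult S) \<in> V) \<and>
     (\<forall>S\<in>V. \<forall>T h. fin_sgr T \<and> sg_hom S T h \<and> h ` carr S = carr T \<longrightarrow> T \<in> V) \<and>
     (\<forall>S\<in>V. \<forall>T\<in>V. \<forall>P f g. fin_sgr P \<and> sg_hom P S f \<and> sg_hom P T g \<and>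
          bij_betw (\<lambda>p. (f p, g p)) (carr P) (carr S \<times> carr T) \<longrightarrow> P \<in> V)"

definition FinSg :: "sgr set" where "FinSg = {S. fin_sgr S}"

text \<open>Elements of the free pro-V semigroup on the alphabet 'x are the 'x-ary
implicit operations on V: natural families (S,\<phi>) \<mapsto> w_S(\<phi>), canonically undefined
outside valid arguments.\<close>
type_synonym 'x pelt = "sgr \<Rightarrow> ('x \<Rightarrow> nat) \<Rightarrow> nat"

definition valid :: "sgr set \<Rightarrow> sgr \<Rightarrow> ('x \<Rightarrow> nat) \<Rightarrow> bool" where
  "valid V S \<phi> \<longleftrightarrow> S \<in> V \<and> range \<phi> \<subseteq> carr S"

definition free_pro :: "sgr set \<Rightarrow> 'x pelt set" where
  "free_pro V = {w. (\<forall>S \<phi>. valid V S \<phi> \<longrightarrow> w S \<phi> \<in> carr S) \<and>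
                    (\<forall>S \<phi>. \<not> valid V S \<phi> \<longrightarrow> w S \<phi> = undefined) \<and>
                    (\<forall>S T h \<phi>. valid V S \<phi> \<and> T \<in> V \<and> sg_hom S T h \<longrightarrow>
                         h (w S \<phi>) = w T (h \<circ> \<phi>))}"

definition proj :: "sgr set \<Rightarrow> 'x pelt \<Rightarrow> 'x pelt" where
  "proj V w = (\<lambda>S \<phi>. if valid V S \<phi> then w S \<phi> else undefined)"

definition gen :: "sgr set \<Rightarrow> 'x \<Rightarrow> 'x pelt" where
  "gen V x = (\<lambda>S \<phi>. if valid V S \<phi> then \<phi> x else undefined)"

definition pmult :: "sgr set \<Rightarrow> 'x pelt \<Rightarrow> 'x pelt \<Rightarrow> 'x pelt" where
  "pmult V u v = (\<lambda>S \<phi>. if valid V S \<phi> then smult S (u S \<phi>) (v S \<phi>) else undefined)"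

definition implicit_op :: "nat \<Rightarrow> (sgr \<Rightarrow> nat list \<Rightarrow> nat) \<Rightarrow> bool" where
  "implicit_op n f \<longleftrightarrow>
     (\<forall>S xs. fin_sgr S \<and> length xs = n \<and> set xs \<subseteq> carr S \<longrightarrow> f S xs \<in> carr S) \<and>
     (\<forall>S xs. \<not> (fin_sgr S \<and> length xs = n \<and> set xs \<subseteq> carr S) \<longrightarrow> f S xs = undefined) \<and>
     (\<forall>S T h xs. fin_sgr S \<and> fin_sgr T \<and> sg_hom S T h \<and> length xs = n \<and> set xs \<subseteq> carr S
        \<longrightarrow> h (f S xs) = f T (map h xs))"

definition mult_op :: "nat \<times> (sgr \<Rightarrow> nat list \<Rightarrow> nat)" where
  "mult_op = (2, \<lambda>S xs. if fin_sgr S \<and> length xs = 2 \<and> set xs \<subseteq> carr S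
                         then smult S (xs ! 0) (xs ! 1) else undefined)"

definition implicit_signature :: "(nat \<times> (sgr \<Rightarrow> nat list \<Rightarrow> nat)) set \<Rightarrow> bool" where
  "implicit_signature \<sigma> \<longleftrightarrow> \<sigma> \<subseteq> {(n, f). implicit_op n f} \<and> mult_op \<in> \<sigma>"

definition apply_op :: "sgr set \<Rightarrow> nat \<times> (sgr \<Rightarrow> nat list \<Rightarrow> nat) \<Rightarrow> 'x pelt list \<Rightarrow> 'x pelt" where
  "apply_op V op ws = (\<lambda>S \<phi>. if valid V S \<phi> then snd op S (map (\<lambda>w. w S \<phi>) ws) else undefined)"

inductive_set subalg :: "sgr set \<Rightarrow> (nat \<times> (sgr \<Rightarrow> nat list \<Rightarrow> nat)) set \<Rightarrow> 'x pelt set \<Rightarrow> 'x pelt set"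
  for V \<sigma> U where
  base: "u \<in> U \<Longrightarrow> u \<in> subalg V \<sigma> U"
| app: "op \<in> \<sigma> \<Longrightarrow> length ws = fst op \<Longrightarrow> \<forall>w\<in>set ws. w \<in> subalg V \<sigma> U \<Longrightarrow> apply_op V op ws \<in> subalg V \<sigma> U"

definition Omega_sigma :: "sgr set \<Rightarrow> (nat \<times> (sgr \<Rightarrow> nat list \<Rightarrow> nat)) set \<Rightarrow> 'x pelt set" where
  "Omega_sigma V \<sigma> = subalg V \<sigma> (range (gen V))"

text \<open>Closure in the free pro-V semigroup (product topology of pointwise
convergence on the finite discrete semigroups of V), and induced closure in
Omega^sigma_X V.\<close>
definition pcl :: "sgr set \<Rightarrow> 'x pelt set \<Rightarrow> 'x pelt set" where
  "pcl V A = {u \<in> free_pro V. \<forall>F. finite F \<and> (\<forall>(S, \<phi>)\<in>F. valid V S \<phi>) \<longrightarrow>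
                 (\<exists>a\<in>A. \<forall>(S, \<phi>)\<in>F. a S \<phi> = u S \<phi>)}"

definition cl_sigma :: "sgr set \<Rightarrow> (nat \<times> (sgr \<Rightarrow> nat list \<Rightarrow> nat)) set \<Rightarrow> 'x pelt set \<Rightarrow> 'x pelt set" where
  "cl_sigma V \<sigma> A = pcl V A \<inter> Omega_sigma V \<sigma>"

definition setmult :: "sgr set \<Rightarrow> 'x pelt set \<Rightarrow> 'x pelt set \<Rightarrow> 'x pelt set" where
  "setmult V A B = {pmult V a b | a b. a \<in> A \<and> b \<in> B}"

inductive_set splus :: "sgr set \<Rightarrow> 'x pelt set \<Rightarrow> 'x pelt set" for V A where
  one: "a \<in> A \<Longrightarrow> a \<in> splus V A"
| step: "u \<in> splus V A \<Longrightarrow> a \<in> A \<Longrightarrow> pmult V u a \<in> splus V A"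

inductive_set rat_closure :: "'x pelt set set \<Rightarrow> 'x pelt set set" for B where
  base: "K \<in> B \<Longrightarrow> K \<in> rat_closure B"
| union: "K \<in> rat_closure B \<Longrightarrow> L \<in> rat_closure B \<Longrightarrow> K \<union> L \<in> rat_closure B"
| prod: "K \<in> rat_closure B \<Longrightarrow> L \<in> rat_closure B \<Longrightarrow> setmult FinSg K L \<in> rat_closure B"
| plus: "K \<in> rat_closure B \<Longrightarrow> splus FinSg K \<in> rat_closure B"

end

theory Submission
  imports Defs "HOL-Library.Nat_Bijection"
begin

declare split_paired_All[simp del] split_paired_Ex[simp del]

lemma iop_val: "implicit_op n f \<Longrightarrow> fin_sgr S \<Longrightarrow> length xs = n \<Longrightarrow> set xs \<subseteq> carr S \<Longrightarrow> f S xs \<in> carr S"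
  unfolding implicit_op_def by blast
lemma iop_nat: "implicit_op n f \<Longrightarrow> fin_sgr S \<Longrightarrow> fin_sgr T \<Longrightarrow> sg_hom S T h \<Longrightarrow> length xs = n \<Longrightarrow> set xs \<subseteq> carr S \<Longrightarrow> h (f S xs) = f T (map h xs)"
  unfolding implicit_op_def by blast

lemma pv_all: "pseudovariety V \<Longrightarrow> \<forall>S\<in>V. fin_sgr S"
  unfolding pseudovariety_def by (erule conjunct1)

lemma pv_fin: "pseudovariety V \<Longrightarrow> S \<in> V \<Longrightarrow> fin_sgr S"
  using pv_all by blast

lemma valid_Fin: "pseudovariety V \<Longrightarrow> valid V S \<phi> \<Longrightarrow> valid FinSg S \<phi>"
  using pv_all[of V] unfolding valid_def FinSg_def by blast

lemma fp_val: "w \<in> free_pro V \<Longrightarrow> valid V S \<phi> \<Longrightarrow> w S \<phi> \<in> carr S"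
  unfolding free_pro_def by blast
lemma fp_undef: "w \<in> free_pro V \<Longrightarrow> \<not> valid V S \<phi> \<Longrightarrow> w S \<phi> = undefined"
  unfolding free_pro_def by blast
lemma fp_nat: "w \<in> free_pro V \<Longrightarrow> valid V S \<phi> \<Longrightarrow> T \<in> V \<Longrightarrow> sg_hom S T h \<Longrightarrow> h (w S \<phi>) = w T (h \<circ> \<phi>)"
  unfolding free_pro_def by blast

lemma sig_op: "implicit_signature \<sigma> \<Longrightarrow> op \<in> \<sigma> \<Longrightarrow> implicit_op (fst op) (snd op)"
proof -
  assume a: "implicit_signature \<sigma>" "op \<in> \<sigma>"
  then have "op \<in> {(n, f). implicit_op n f}" unfolding implicit_signature_def by (elim conjE) (erule subsetD)
  then show ?thesis by (cases op) simp
qed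

lemma valid_hom: "valid V S \<phi> \<Longrightarrow> T \<in> V \<Longrightarrow> sg_hom S T h \<Longrightarrow> valid V T (h \<circ> \<phi>)"
  unfolding valid_def sg_hom_def by (metis image_comp image_mono order_trans)

lemma apply_op_fp:
  fixes ws :: "'x pelt list"
  assumes V: "\<forall>S\<in>V. fin_sgr S" and imp: "implicit_op (fst op) (snd op)"
    and len: "length ws = fst op" and ws: "set ws \<subseteq> free_pro V"
  shows "apply_op V op ws \<in> free_pro V"
proof -
  have A: "snd op S (map (\<lambda>w. w S \<phi>) ws) \<in> carr S" if "valid V S \<phi>" for S and \<phi> :: "'x \<Rightarrow> nat"
  proof -
    have "fin_sgr S" using V that by (auto simp: valid_def)
    moreover have "set (map (\<lambda>w. w S \<phi>) ws) \<subseteq> carr S" using ws that fp_val[of _ V S \<phi>] by auto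
    ultimately show ?thesis using iop_val[OF imp, of S "map (\<lambda>w. w S \<phi>) ws"] len by simp
  qed
  have C: "h (apply_op V op ws S \<phi>) = apply_op V op ws T (h \<circ> \<phi>)"
    if vs: "valid V S \<phi>" and T: "T \<in> V" and h: "sg_hom S T h" for S T h and \<phi> :: "'x \<Rightarrow> nat"
  proof -
    have "fin_sgr S" "fin_sgr T" using V vs T by (auto simp: valid_def)
    moreover have "set (map (\<lambda>w. w S \<phi>) ws) \<subseteq> carr S" using ws vs fp_val[of _ V S \<phi>] by auto
    ultimately have "h (snd op S (map (\<lambda>w. w S \<phi>) ws)) = snd op T (map h (map (\<lambda>w. w S \<phi>) ws))"
      using iop_nat[OF imp, of S T h "map (\<lambda>w. w S \<phi>) ws"] len h by simp
    also have "map h (map (\<lambda>w. w S \<phi>) ws) = map (\<lambda>w. w T (h \<circ> \<phi>)) ws"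
      using ws fp_nat[OF _ vs T h] by auto
    finally show ?thesis using vs valid_hom[OF vs T h] by (simp add: apply_op_def)
  qed
  show ?thesis unfolding free_pro_def mem_Collect_eq
  proof (intro conjI allI impI)
    fix S and \<phi> :: "'x \<Rightarrow> nat" assume "valid V S \<phi>"
    then show "apply_op V op ws S \<phi> \<in> carr S" using A by (simp add: apply_op_def)
  next
    fix S and \<phi> :: "'x \<Rightarrow> nat" assume "\<not> valid V S \<phi>"
    then show "apply_op V op ws S \<phi> = undefined" by (simp add: apply_op_def)
  next
    fix S T h and \<phi> :: "'x \<Rightarrow> nat" assume "valid V S \<phi> \<and> T \<in> V \<and> sg_hom S T h"
    then show "h (apply_op V op ws S \<phi>) = apply_op V op ws T (h \<circ> \<phi>)" using C by blast
  qed
qed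

lemma gen_fp: "gen V (x::'x) \<in> free_pro V"
  unfolding free_pro_def mem_Collect_eq
proof (intro conjI allI impI)
  fix S and \<phi> :: "'x \<Rightarrow> nat" assume "valid V S \<phi>"
  then show "gen V x S \<phi> \<in> carr S" by (auto simp: gen_def valid_def)
next
  fix S and \<phi> :: "'x \<Rightarrow> nat" assume "\<not> valid V S \<phi>"
  then show "gen V x S \<phi> = undefined" by (simp add: gen_def)
next
  fix S T h and \<phi> :: "'x \<Rightarrow> nat" assume a: "valid V S \<phi> \<and> T \<in> V \<and> sg_hom S T h"
  then have "valid V T (h \<circ> \<phi>)" using valid_hom by blast
  then show "h (gen V x S \<phi>) = gen V x T (h \<circ> \<phi>)" using a by (simp add: gen_def)
qed

lemma subalg_fp:
  assumes "\<forall>S\<in>V. fin_sgr S" "implicit_signature \<sigma>" "U \<subseteq> free_pro V"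
  shows "subalg V \<sigma> U \<subseteq> free_pro V"
proof
  fix u assume "u \<in> subalg V \<sigma> U"
  then show "u \<in> free_pro V"
  proof induction
    case (base u) then show ?case using assms by auto
  next
    case (app op ws) show ?case
      by (rule apply_op_fp[OF assms(1) sig_op[OF assms(2) app(1)] app(2)]) (use app in auto)
  qed
qed

lemma Omega_fp: "\<forall>S\<in>V. fin_sgr S \<Longrightarrow> implicit_signature \<sigma> \<Longrightarrow> Omega_sigma V \<sigma> \<subseteq> free_pro V"
  unfolding Omega_sigma_def by (rule subalg_fp) (use gen_fp in auto)

lemma pmult_apply:
  assumes "\<forall>S\<in>V. fin_sgr S" "u \<in> free_pro V" "v \<in> free_pro V"
  shows "pmult V u v = apply_op V mult_op [u, v]"
proof (intro ext)
  fix S \<phi>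
  show "pmult V u v S \<phi> = apply_op V mult_op [u, v] S \<phi>"
  proof (cases "valid V S \<phi>")
    case True
    then have "u S \<phi> \<in> carr S" "v S \<phi> \<in> carr S" using fp_val assms by blast+
    moreover have "fin_sgr S" using True assms by (auto simp: valid_def)
    ultimately show ?thesis using True by (simp add: pmult_def apply_op_def mult_op_def)
  next
    case False then show ?thesis by (simp add: pmult_def apply_op_def)
  qed
qed

lemma mult_in_sig: "implicit_signature \<sigma> \<Longrightarrow> mult_op \<in> \<sigma>"
  unfolding implicit_signature_def by (erule conjunct2)

lemma fst_mult: "fst mult_op = 2" by (simp add: mult_op_def)

lemma pmult_fp:
  assumes "\<forall>S\<in>V. fin_sgr S" "implicit_signature \<sigma>" "u \<in> free_pro V" "v \<in> free_pro V"
  shows "pmult V u v \<in> free_pro V"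
proof -
  have "apply_op V mult_op [u,v] \<in> free_pro V"
    by (rule apply_op_fp[OF assms(1) sig_op[OF assms(2) mult_in_sig[OF assms(2)]]])
       (use assms(3,4) in \<open>simp_all add: fst_mult\<close>)
  then show ?thesis using pmult_apply assms by metis
qed

lemma pmult_subalg:
  assumes "\<forall>S\<in>V. fin_sgr S" "implicit_signature \<sigma>" "U \<subseteq> free_pro V"
    "u \<in> subalg V \<sigma> U" "v \<in> subalg V \<sigma> U"
  shows "pmult V u v \<in> subalg V \<sigma> U"
proof -
  have "u \<in> free_pro V" "v \<in> free_pro V" using subalg_fp assms by blast+
  then have "pmult V u v = apply_op V mult_op [u, v]" using pmult_apply assms by blast
  moreover have "apply_op V mult_op [u, v] \<in> subalg V \<sigma> U"
    by (rule subalg.app[OF mult_in_sig[OF assms(2)]]) (use assms(4,5) in \<open>simp_all add: fst_mult\<close>)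
  ultimately show ?thesis by simp
qed

lemma pmult_Omega:
  fixes u v :: "'x pelt"
  assumes "\<forall>S\<in>V. fin_sgr S" "implicit_signature \<sigma>"
    "u \<in> Omega_sigma V \<sigma>" "v \<in> Omega_sigma V \<sigma>"
  shows "pmult V u v \<in> Omega_sigma V \<sigma>"
proof -
  have "range (gen V :: 'x \<Rightarrow> 'x pelt) \<subseteq> free_pro V" by (auto intro: gen_fp)
  from pmult_subalg[OF assms(1,2) this] assms(3,4) show ?thesis unfolding Omega_sigma_def by blast
qed

lemma Fin_all: "\<forall>S\<in>FinSg. fin_sgr S" by (simp add: FinSg_def)

lemma fin_closed: "fin_sgr S \<Longrightarrow> a \<in> carr S \<Longrightarrow> b \<in> carr S \<Longrightarrow> smult S a b \<in> carr S"
  unfolding fin_sgr_def by blast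
lemma fin_assoc: "fin_sgr S \<Longrightarrow> a \<in> carr S \<Longrightarrow> b \<in> carr S \<Longrightarrow> c \<in> carr S \<Longrightarrow>
    smult S (smult S a b) c = smult S a (smult S b c)"
  unfolding fin_sgr_def by blast

lemma proj_apply:
  assumes pv: "pseudovariety V"
  shows "proj V (apply_op FinSg op ws) = apply_op V op (map (proj V) ws)"
proof (intro ext)
  fix S \<phi>
  show "proj V (apply_op FinSg op ws) S \<phi> = apply_op V op (map (proj V) ws) S \<phi>"
  proof (cases "valid V S \<phi>")
    case True
    then have "valid FinSg S \<phi>" using valid_Fin[OF pv] by blast
    moreover have "map (\<lambda>w. proj V w S \<phi>) ws = map (\<lambda>w. w S \<phi>) ws"
      using True by (simp add: proj_def)
    ultimately show ?thesis using True by (simp add: proj_def apply_op_def o_def)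
  next
    case False then show ?thesis by (simp add: proj_def apply_op_def)
  qed
qed

lemma proj_gen:
  assumes pv: "pseudovariety V"
  shows "proj V (gen FinSg x) = gen V x"
proof (intro ext)
  fix S \<phi>
  show "proj V (gen FinSg x) S \<phi> = gen V x S \<phi>"
  proof (cases "valid V S \<phi>")
    case True
    then have "valid FinSg S \<phi>" using valid_Fin[OF pv] by blast
    then show ?thesis using True by (simp add: proj_def gen_def)
  next
    case False then show ?thesis by (simp add: proj_def gen_def)
  qed
qed

lemma proj_pmult:
  assumes pv: "pseudovariety V"
  shows "proj V (pmult FinSg u v) = pmult V (proj V u) (proj V v)"
proof (intro ext)
  fix S \<phi>
  show "proj V (pmult FinSg u v) S \<phi> = pmult V (proj V u) (proj V v) S \<phi>"
  proof (cases "valid V S \<phi>")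
    case True
    then have "valid FinSg S \<phi>" using valid_Fin[OF pv] by blast
    then show ?thesis using True by (simp add: proj_def pmult_def)
  next
    case False then show ?thesis by (simp add: proj_def pmult_def)
  qed
qed

lemma proj_fp:
  fixes u :: "'x pelt"
  assumes pv: "pseudovariety V" and u: "u \<in> free_pro FinSg"
  shows "proj V u \<in> free_pro V"
  unfolding free_pro_def mem_Collect_eq
proof (intro conjI allI impI)
  fix S and \<phi> :: "'x \<Rightarrow> nat" assume a: "valid V S \<phi>"
  then have "valid FinSg S \<phi>" using valid_Fin[OF pv] by blast
  then show "proj V u S \<phi> \<in> carr S" using a fp_val[OF u] by (simp add: proj_def)
next
  fix S and \<phi> :: "'x \<Rightarrow> nat" assume "\<not> valid V S \<phi>"
  then show "proj V u S \<phi> = undefined" by (simp add: proj_def)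
next
  fix S T h and \<phi> :: "'x \<Rightarrow> nat" assume a: "valid V S \<phi> \<and> T \<in> V \<and> sg_hom S T h"
  then have v1: "valid V T (h \<circ> \<phi>)" using valid_hom by blast
  have "valid FinSg S \<phi>" using a valid_Fin[OF pv] by blast
  moreover have "T \<in> FinSg" using a pv_fin[OF pv] by (simp add: FinSg_def)
  ultimately have "h (u S \<phi>) = u T (h \<circ> \<phi>)" using fp_nat[OF u] a by blast
  then show "h (proj V u S \<phi>) = proj V u T (h \<circ> \<phi>)" using a v1 by (simp add: proj_def)
qed

lemma proj_subalg:
  assumes pv: "pseudovariety V"
  shows "proj V ` subalg FinSg \<sigma> U \<subseteq> subalg V \<sigma> (proj V ` U)"
proof (rule image_subsetI)
  fix u assume "u \<in> subalg FinSg \<sigma> U"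
  then show "proj V u \<in> subalg V \<sigma> (proj V ` U)"
  proof induction
    case (base u) then show ?case by (blast intro: subalg.base)
  next
    case (app op ws)
    have "apply_op V op (map (proj V) ws) \<in> subalg V \<sigma> (proj V ` U)"
      by (rule subalg.app) (use app in auto)
    then show ?case by (simp add: proj_apply[OF pv])
  qed
qed

lemma list_choice: "\<forall>w\<in>set ws. w \<in> f ` A \<Longrightarrow> \<exists>ws'. set ws' \<subseteq> A \<and> map f ws' = ws"
proof (induction ws)
  case Nil then show ?case by simp
next
  case (Cons w ws)
  then obtain ws' where "set ws' \<subseteq> A" "map f ws' = ws" by auto
  moreover obtain a where "a \<in> A" "w = f a" using Cons.prems by auto
  ultimately show ?case by (intro exI[of _ "a # ws'"]) simp
qed

lemma subalg_proj:
  assumes pv: "pseudovariety V"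
  shows "subalg V \<sigma> (proj V ` U) \<subseteq> proj V ` subalg FinSg \<sigma> U"
proof
  fix u assume "u \<in> subalg V \<sigma> (proj V ` U)"
  then show "u \<in> proj V ` subalg FinSg \<sigma> U"
  proof induction
    case (base u) then show ?case by (blast intro: subalg.base)
  next
    case (app op ws)
    have "\<forall>w\<in>set ws. w \<in> proj V ` subalg FinSg \<sigma> U" using app(3) by blast
    then obtain ws' where ws': "set ws' \<subseteq> subalg FinSg \<sigma> U" "map (proj V) ws' = ws"
      using list_choice by metis
    have "apply_op FinSg op ws' \<in> subalg FinSg \<sigma> U"
      by (rule subalg.app) (use app(1,2) ws' in auto)
    moreover have "proj V (apply_op FinSg op ws') = apply_op V op ws"
      using ws'(2) by (simp add: proj_apply[OF pv])
    ultimately show ?case by (metis image_eqI)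
  qed
qed

lemma Omega_proj:
  fixes \<sigma>
  assumes pv: "pseudovariety V"
  shows "proj V ` (Omega_sigma FinSg \<sigma> :: 'x pelt set) \<subseteq> Omega_sigma V \<sigma>"
proof -
  have "proj V ` range (gen FinSg :: 'x \<Rightarrow> 'x pelt) = range (gen V)"
    by (simp add: image_image proj_gen[OF pv])
  then show ?thesis unfolding Omega_sigma_def using proj_subalg[OF pv] by metis
qed

lemma splus_proj:
  assumes pv: "pseudovariety V"
  shows "proj V ` splus FinSg A = splus V (proj V ` A)"
proof
  show "proj V ` splus FinSg A \<subseteq> splus V (proj V ` A)"
  proof (rule image_subsetI)
    fix u assume "u \<in> splus FinSg A"
    then show "proj V u \<in> splus V (proj V ` A)"
    proof induction
      case (one a) then show ?case by (blast intro: splus.one)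
    next
      case (step u a) then show ?case
        by (auto simp: proj_pmult[OF pv] intro: splus.step)
    qed
  qed
next
  show "splus V (proj V ` A) \<subseteq> proj V ` splus FinSg A"
  proof
    fix u assume "u \<in> splus V (proj V ` A)"
    then show "u \<in> proj V ` splus FinSg A"
    proof induction
      case (one a) then show ?case by (blast intro: splus.one)
    next
      case (step u a)
      then obtain u' a' where "u' \<in> splus FinSg A" "u = proj V u'" "a' \<in> A" "a = proj V a'" by blast
      then have "pmult FinSg u' a' \<in> splus FinSg A" "proj V (pmult FinSg u' a') = pmult V u a"
        by (auto simp: proj_pmult[OF pv] intro: splus.step)
      then show ?case by (metis image_eqI)
    qed
  qed
qed

lemma splus_Omega:
  fixes A :: "'x pelt set"
  assumes sig: "implicit_signature \<sigma>" and A: "A \<subseteq> Omega_sigma FinSg \<sigma>"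
  shows "splus FinSg A \<subseteq> Omega_sigma FinSg \<sigma>"
proof
  fix u assume "u \<in> splus FinSg A"
  then show "u \<in> Omega_sigma FinSg \<sigma>"
  proof induction
    case (one a) then show ?case using A by blast
  next
    case (step u a) then show ?case using pmult_Omega[OF Fin_all sig, of u a] A by blast
  qed
qed

lemma pmult_assoc:
  assumes V: "\<forall>S\<in>V. fin_sgr S" and u: "u \<in> free_pro V" and v: "v \<in> free_pro V" and w: "w \<in> free_pro V"
  shows "pmult V (pmult V u v) w = pmult V u (pmult V v w)"
proof (intro ext)
  fix S \<phi>
  show "pmult V (pmult V u v) w S \<phi> = pmult V u (pmult V v w) S \<phi>"
  proof (cases "valid V S \<phi>")
    case True
    then have "u S \<phi> \<in> carr S" "v S \<phi> \<in> carr S" "w S \<phi> \<in> carr S" using fp_val u v w by blast+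
    moreover have "fin_sgr S" using True V by (auto simp: valid_def)
    ultimately show ?thesis using True fin_assoc by (simp add: pmult_def)
  next
    case False then show ?thesis by (simp add: pmult_def)
  qed
qed

lemma splus_fp:
  assumes sig: "implicit_signature \<sigma>" and A: "A \<subseteq> free_pro FinSg"
  shows "splus FinSg A \<subseteq> free_pro FinSg"
proof
  fix u assume "u \<in> splus FinSg A"
  then show "u \<in> free_pro FinSg"
  proof induction
    case (one a) then show ?case using A by blast
  next
    case (step u a) then show ?case using pmult_fp[OF Fin_all sig, of u a] A by blast
  qed
qed

lemma splus_closed:
  assumes sig: "implicit_signature \<sigma>" and A: "A \<subseteq> free_pro FinSg"
    and v: "v \<in> splus FinSg A" and u: "u \<in> splus FinSg A"
  shows "pmult FinSg u v \<in> splus FinSg A"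
  using v
proof induction
  case (one a) then show ?case using u by (rule splus.step[rotated])
next
  case (step v a)
  have "u \<in> free_pro FinSg" "v \<in> free_pro FinSg" "a \<in> free_pro FinSg"
    using splus_fp[OF sig A] u step A by blast+
  then have "pmult FinSg u (pmult FinSg v a) = pmult FinSg (pmult FinSg u v) a"
    using pmult_assoc[OF Fin_all, of u v a] by metis
  then show ?case using step by (simp add: splus.step)
qed

lemma pcl_fp: "pcl V A \<subseteq> free_pro V" by (auto simp: pcl_def)

lemma pclI: "u \<in> free_pro V \<Longrightarrow>
  (\<And>F. finite F \<Longrightarrow> \<forall>(S, \<phi>)\<in>F. valid V S \<phi> \<Longrightarrow> \<exists>a\<in>A. \<forall>(S, \<phi>)\<in>F. a S \<phi> = u S \<phi>)
  \<Longrightarrow> u \<in> pcl V A"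
  unfolding pcl_def by blast

lemma pclD: "u \<in> pcl V A \<Longrightarrow> finite F \<Longrightarrow> \<forall>(S, \<phi>)\<in>F. valid V S \<phi> \<Longrightarrow> \<exists>a\<in>A. \<forall>(S, \<phi>)\<in>F. a S \<phi> = u S \<phi>"
  unfolding pcl_def by blast

lemma pcl_mono: "A \<subseteq> B \<Longrightarrow> pcl V A \<subseteq> pcl V B"
proof
  fix u assume AB: "A \<subseteq> B" and u: "u \<in> pcl V A"
  show "u \<in> pcl V B"
  proof (rule pclI)
    show "u \<in> free_pro V" using u pcl_fp by blast
  next
    fix F :: "(sgr \<times> ('a \<Rightarrow> nat)) set" assume "finite F" "\<forall>(S, \<phi>)\<in>F. valid V S \<phi>"
    from pclD[OF u this] AB show "\<exists>a\<in>B. \<forall>(S, \<phi>)\<in>F. a S \<phi> = u S \<phi>" by blast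
  qed
qed

lemma pcl_sub: "A \<subseteq> free_pro V \<Longrightarrow> A \<subseteq> pcl V A"
  by (auto intro!: pclI)

lemma ball_pair: "(\<forall>(S, \<phi>)\<in>F. P S \<phi>) = (\<forall>p\<in>F. P (fst p) (snd p))"
  by (simp add: case_prod_unfold)

lemma pcl_finite:
  fixes A :: "'x pelt set"
  assumes fin: "finite A" and A: "A \<subseteq> free_pro V"
  shows "pcl V A \<subseteq> A"
proof
  fix u assume u: "u \<in> pcl V A"
  show "u \<in> A"
  proof (rule ccontr)
    assume nu: "u \<notin> A"
    have "\<exists>p. a (fst p) (snd p) \<noteq> u (fst p) (snd p)" if "a \<in> A" for a
    proof -
      have "a \<noteq> u" using that nu by blast
      then obtain S \<phi> where "a S \<phi> \<noteq> u S \<phi>" by (metis ext)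
      then show ?thesis by (intro exI[of _ "(S,\<phi>)"]) simp
    qed
    then obtain sep where sep: "\<And>a. a \<in> A \<Longrightarrow> a (fst (sep a)) (snd (sep a)) \<noteq> u (fst (sep a)) (snd (sep a))"
      by metis
    have uf: "u \<in> free_pro V" using u pcl_fp by blast
    have val: "valid V (fst (sep a)) (snd (sep a))" if a: "a \<in> A" for a
    proof (rule ccontr)
      assume nv: "\<not> valid V (fst (sep a)) (snd (sep a))"
      have "a \<in> free_pro V" using a A by blast
      then have "a (fst (sep a)) (snd (sep a)) = undefined" using fp_undef nv by blast
      moreover have "u (fst (sep a)) (snd (sep a)) = undefined" using fp_undef[OF uf] nv by blast
      ultimately show False using sep[OF a] by simp
    qed
    have "finite (sep ` A)" using fin by simp
    moreover have "\<forall>(S, \<phi>)\<in>sep ` A. valid V S \<phi>" unfolding ball_pair using val by blast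
    ultimately obtain a where a: "a \<in> A" "\<forall>(S, \<phi>)\<in>sep ` A. a S \<phi> = u S \<phi>"
      using pclD[OF u] by blast
    then have "a (fst (sep a)) (snd (sep a)) = u (fst (sep a)) (snd (sep a))"
      unfolding ball_pair by blast
    then show False using sep[OF a(1)] by simp
  qed
qed

lemma pcl_Un:
  fixes A B :: "'x pelt set"
  shows "pcl V (A \<union> B) \<subseteq> pcl V A \<union> pcl V B"
proof
  fix u assume u: "u \<in> pcl V (A \<union> B)"
  show "u \<in> pcl V A \<union> pcl V B"
  proof (rule ccontr)
    assume "\<not> ?thesis"
    then have nA: "u \<notin> pcl V A" and nB: "u \<notin> pcl V B" by auto
    have uf: "u \<in> free_pro V" using u pcl_fp by blast
    from nA uf obtain F1 :: "(sgr \<times> ('x \<Rightarrow> nat)) set" where F1: "finite F1" "\<forall>(S, \<phi>)\<in>F1. valid V S \<phi>"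
      "\<not> (\<exists>a\<in>A. \<forall>(S, \<phi>)\<in>F1. a S \<phi> = u S \<phi>)" unfolding pcl_def by blast
    from nB uf obtain F2 :: "(sgr \<times> ('x \<Rightarrow> nat)) set" where F2: "finite F2" "\<forall>(S, \<phi>)\<in>F2. valid V S \<phi>"
      "\<not> (\<exists>a\<in>B. \<forall>(S, \<phi>)\<in>F2. a S \<phi> = u S \<phi>)" unfolding pcl_def by blast
    have "finite (F1 \<union> F2)" "\<forall>(S, \<phi>)\<in>F1 \<union> F2. valid V S \<phi>" using F1 F2 unfolding ball_pair by auto
    from pclD[OF u this] obtain a where a: "a \<in> A \<union> B" "\<forall>(S, \<phi>)\<in>F1 \<union> F2. a S \<phi> = u S \<phi>" by blast
    show False
    proof (cases "a \<in> A")
      case True then show False using F1(3) a(2) unfolding ball_pair by blast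
    next
      case False then show False using F2(3) a unfolding ball_pair by blast
    qed
  qed
qed

lemma pcl_mult:
  fixes u v :: "'x pelt"
  assumes sig: "implicit_signature \<sigma>" and u: "u \<in> pcl FinSg K" and v: "v \<in> pcl FinSg L"
  shows "pmult FinSg u v \<in> pcl FinSg (setmult FinSg K L)"
proof (rule pclI)
  have "u \<in> free_pro FinSg" "v \<in> free_pro FinSg" using u v pcl_fp by blast+
  then show "pmult FinSg u v \<in> free_pro FinSg" using pmult_fp[OF Fin_all sig, of u v] by blast
next
  fix F :: "(sgr \<times> ('x \<Rightarrow> nat)) set" assume F: "finite F" "\<forall>(S, \<phi>)\<in>F. valid FinSg S \<phi>"
  obtain a where a: "a \<in> K" "\<forall>(S, \<phi>)\<in>F. a S \<phi> = u S \<phi>" using pclD[OF u F] by blast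
  obtain b where b: "b \<in> L" "\<forall>(S, \<phi>)\<in>F. b S \<phi> = v S \<phi>" using pclD[OF v F] by blast
  have "pmult FinSg a b \<in> setmult FinSg K L" using a b by (auto simp: setmult_def)
  moreover have "\<forall>(S, \<phi>)\<in>F. pmult FinSg a b S \<phi> = pmult FinSg u v S \<phi>"
    using a(2) b(2) unfolding ball_pair by (simp add: pmult_def)
  ultimately show "\<exists>c\<in>setmult FinSg K L. \<forall>(S, \<phi>)\<in>F. c S \<phi> = pmult FinSg u v S \<phi>" by blast
qed

lemma pcl_proj:
  fixes u :: "'x pelt"
  assumes pv: "pseudovariety V" and u: "u \<in> pcl FinSg L"
  shows "proj V u \<in> pcl V (proj V ` L)"
proof (rule pclI)
  show "proj V u \<in> free_pro V" using proj_fp[OF pv, of u] u pcl_fp by blast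
next
  fix F :: "(sgr \<times> ('x \<Rightarrow> nat)) set" assume F: "finite F" "\<forall>(S, \<phi>)\<in>F. valid V S \<phi>"
  then have F2: "\<forall>(S, \<phi>)\<in>F. valid FinSg S \<phi>" using valid_Fin[OF pv] unfolding ball_pair by blast
  obtain a where a: "a \<in> L" "\<forall>(S, \<phi>)\<in>F. a S \<phi> = u S \<phi>" using pclD[OF u F(1) F2] by blast
  then have "\<forall>(S, \<phi>)\<in>F. proj V a S \<phi> = proj V u S \<phi>" using F(2) unfolding ball_pair by (simp add: proj_def)
  with a(1) show "\<exists>c\<in>proj V ` L. \<forall>(S, \<phi>)\<in>F. c S \<phi> = proj V u S \<phi>" by blast
qed

lemma cl_mono: "A \<subseteq> B \<Longrightarrow> cl_sigma V \<sigma> A \<subseteq> cl_sigma V \<sigma> B"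
  unfolding cl_sigma_def using pcl_mono by blast

lemma cl_proj_sub:
  fixes L :: "'x pelt set"
  assumes pv: "pseudovariety V"
  shows "proj V ` cl_sigma FinSg \<sigma> L \<subseteq> cl_sigma V \<sigma> (proj V ` L)"
proof
  fix y assume "y \<in> proj V ` cl_sigma FinSg \<sigma> L"
  then obtain u where u: "u \<in> pcl FinSg L" "u \<in> Omega_sigma FinSg \<sigma>" "y = proj V u"
    unfolding cl_sigma_def by blast
  have "proj V u \<in> pcl V (proj V ` L)" using pcl_proj[OF pv u(1)] .
  moreover have "proj V u \<in> Omega_sigma V \<sigma>" using Omega_proj[OF pv, of \<sigma>] u(2) by blast
  ultimately show "y \<in> cl_sigma V \<sigma> (proj V ` L)" using u(3) unfolding cl_sigma_def by blast
qed

lemma subalg_mono: "U \<subseteq> U' \<Longrightarrow> subalg V \<sigma> U \<subseteq> subalg V \<sigma> U'"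
proof
  fix u assume UU: "U \<subseteq> U'" and u: "u \<in> subalg V \<sigma> U"
  from u show "u \<in> subalg V \<sigma> U'"
  proof induction
    case (base u) then show ?case using UU by (blast intro: subalg.base)
  next
    case (app op ws) then show ?case by (auto intro: subalg.app)
  qed
qed

definition prodS :: "sgr \<Rightarrow> sgr \<Rightarrow> sgr" where
  "prodS P S = (prod_encode ` (carr P \<times> carr S),
     \<lambda>x y. prod_encode (smult P (fst (prod_decode x)) (fst (prod_decode y)),
                        smult S (snd (prod_decode x)) (snd (prod_decode y))))"

lemma carr_prodS: "carr (prodS P S) = prod_encode ` (carr P \<times> carr S)"
  by (simp add: prodS_def carr_def)
lemma smult_prodS: "smult (prodS P S) x y = prod_encode (smult P (fst (prod_decode x)) (fst (prod_decode y)),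
                        smult S (snd (prod_decode x)) (snd (prod_decode y)))"
  by (simp add: prodS_def smult_def)

lemma fin_finite: "fin_sgr S \<Longrightarrow> finite (carr S)" unfolding fin_sgr_def by blast
lemma fin_ne: "fin_sgr S \<Longrightarrow> carr S \<noteq> {}" unfolding fin_sgr_def by blast

lemma prodS_fin:
  assumes P: "fin_sgr P" and S: "fin_sgr S"
  shows "fin_sgr (prodS P S)"
  unfolding fin_sgr_def
proof (intro conjI ballI)
  show "finite (carr (prodS P S))" unfolding carr_prodS
    using fin_finite[OF P] fin_finite[OF S] by simp
  show "carr (prodS P S) \<noteq> {}" unfolding carr_prodS
    using fin_ne[OF P] fin_ne[OF S] by simp
next
  fix a b assume "a \<in> carr (prodS P S)" "b \<in> carr (prodS P S)"
  then obtain x1 y1 x2 y2 where "a = prod_encode (x1, y1)" "x1 \<in> carr P" "y1 \<in> carr S"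
    "b = prod_encode (x2, y2)" "x2 \<in> carr P" "y2 \<in> carr S" unfolding carr_prodS by blast
  then show "smult (prodS P S) a b \<in> carr (prodS P S)"
    using fin_closed[OF P] fin_closed[OF S] by (simp add: smult_prodS carr_prodS)
next
  fix a b c assume "a \<in> carr (prodS P S)" "b \<in> carr (prodS P S)" "c \<in> carr (prodS P S)"
  then obtain x1 y1 x2 y2 x3 y3 where "a = prod_encode (x1, y1)" "x1 \<in> carr P" "y1 \<in> carr S"
    "b = prod_encode (x2, y2)" "x2 \<in> carr P" "y2 \<in> carr S"
    "c = prod_encode (x3, y3)" "x3 \<in> carr P" "y3 \<in> carr S" unfolding carr_prodS by blast
  then show "smult (prodS P S) (smult (prodS P S) a b) c = smult (prodS P S) a (smult (prodS P S) b c)"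
    using fin_closed[OF P] fin_closed[OF S] fin_assoc[OF P] fin_assoc[OF S] by (simp add: smult_prodS)
qed

lemma prodS_hom1: "sg_hom (prodS P S) P (\<lambda>x. fst (prod_decode x))"
  unfolding sg_hom_def carr_prodS by (auto simp: smult_prodS)
lemma prodS_hom2: "sg_hom (prodS P S) S (\<lambda>x. snd (prod_decode x))"
  unfolding sg_hom_def carr_prodS by (auto simp: smult_prodS)

lemma hom_comp: "sg_hom P Q g \<Longrightarrow> sg_hom Q S h \<Longrightarrow> sg_hom P S (h \<circ> g)"
  unfolding sg_hom_def by (auto simp: image_subset_iff)

definition trivS :: sgr where "trivS = ({0}, \<lambda>_ _. 0)"

lemma trivS_fin: "fin_sgr trivS"
  by (simp add: fin_sgr_def trivS_def carr_def smult_def)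

lemma directed:
  fixes F :: "(sgr \<times> ('x \<Rightarrow> nat)) set"
  assumes "finite F" "\<forall>p\<in>F. valid FinSg (fst p) (snd p)"
  shows "\<exists>P (\<psi>::'x\<Rightarrow>nat). valid FinSg P \<psi> \<and> (\<forall>p\<in>F. \<exists>h. sg_hom P (fst p) h \<and> h \<circ> \<psi> = snd p)"
  using assms
proof (induction F rule: finite_induct)
  case empty
  have "valid FinSg trivS (\<lambda>_::'x. 0)"
    using trivS_fin by (auto simp: valid_def FinSg_def trivS_def carr_def)
  then show ?case by blast
next
  case (insert p F)
  have "\<forall>q\<in>F. valid FinSg (fst q) (snd q)" using insert.prems by blast
  from insert.IH[OF this] obtain P and \<psi> :: "'x \<Rightarrow> nat" where P: "valid FinSg P \<psi>"
    "\<forall>q\<in>F. \<exists>h. sg_hom P (fst q) h \<and> h \<circ> \<psi> = snd q" by blast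
  obtain S \<phi> where p: "p = (S, \<phi>)" by (cases p)
  have vS: "valid FinSg S \<phi>" using insert.prems p by auto
  have finP: "fin_sgr P" and finS: "fin_sgr S" using P(1) vS by (auto simp: valid_def FinSg_def)
  define Q where "Q = prodS P S"
  define \<psi>' where "\<psi>' = (\<lambda>x. prod_encode (\<psi> x, \<phi> x))"
  have "range \<psi>' \<subseteq> carr Q" using P(1) vS
    unfolding Q_def \<psi>'_def carr_prodS valid_def by auto
  then have vQ: "valid FinSg Q \<psi>'" using prodS_fin[OF finP finS]
    unfolding valid_def FinSg_def Q_def by simp
  have "\<forall>q\<in>insert p F. \<exists>h. sg_hom Q (fst q) h \<and> h \<circ> \<psi>' = snd q"
  proof
    fix q assume "q \<in> insert p F"
    then show "\<exists>h. sg_hom Q (fst q) h \<and> h \<circ> \<psi>' = snd q"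
    proof
      assume "q = p"
      then show ?thesis using prodS_hom2[of P S] unfolding Q_def \<psi>'_def p
        by (intro exI[of _ "\<lambda>x. snd (prod_decode x)"]) (auto simp: o_def)
    next
      assume "q \<in> F"
      then obtain h where h: "sg_hom P (fst q) h" "h \<circ> \<psi> = snd q" using P(2) by blast
      have "sg_hom Q (fst q) (h \<circ> (\<lambda>x. fst (prod_decode x)))"
        unfolding Q_def by (rule hom_comp[OF prodS_hom1 h(1)])
      moreover have "(h \<circ> (\<lambda>x. fst (prod_decode x))) \<circ> \<psi>' = snd q"
        using h(2) unfolding \<psi>'_def by (auto simp: o_def fun_eq_iff)
      ultimately show ?thesis by blast
    qed
  qed
  then show ?case using vQ by blast
qed

lemma no_nullary:
  assumes "implicit_op 0 f" shows False
proof -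
  define T2 :: sgr where "T2 = ({0, 1}, \<lambda>a b. min a b)"
  have fT: "fin_sgr T2" by (auto simp: fin_sgr_def T2_def carr_def smult_def min_def)
  have h0: "sg_hom trivS T2 (\<lambda>_. 0)" and h1: "sg_hom trivS T2 (\<lambda>_. 1)"
    by (auto simp: sg_hom_def trivS_def T2_def carr_def smult_def)
  have "0 = f T2 []" using iop_nat[OF assms trivS_fin fT h0, of "[]"] by simp
  moreover have "1 = f T2 []" using iop_nat[OF assms trivS_fin fT h1, of "[]"] by simp
  ultimately show False by simp
qed

lemma plus_cl:
  fixes L :: "'x pelt set"
  assumes sig: "implicit_signature \<sigma>" and L: "L \<subseteq> Omega_sigma FinSg \<sigma>"
  shows "subalg FinSg \<sigma> (cl_sigma FinSg \<sigma> L) \<subseteq> cl_sigma FinSg \<sigma> (splus FinSg L)"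
proof
  let ?T = "splus FinSg L"
  have Lf: "L \<subseteq> free_pro FinSg" using L Omega_fp[OF Fin_all sig] by blast
  have Tf: "?T \<subseteq> free_pro FinSg" using splus_fp[OF sig Lf] .
  fix u assume "u \<in> subalg FinSg \<sigma> (cl_sigma FinSg \<sigma> L)"
  then show "u \<in> cl_sigma FinSg \<sigma> ?T"
  proof induction
    case (base u)
    have "L \<subseteq> ?T" by (auto intro: splus.one)
    then show ?case using base cl_mono by blast
  next
    case (app op ws)
    have wsT: "\<forall>w\<in>set ws. w \<in> pcl FinSg ?T" and wsO: "\<forall>w\<in>set ws. w \<in> Omega_sigma FinSg \<sigma>"
      using app(3) unfolding cl_sigma_def by blast+
    have wsf: "set ws \<subseteq> free_pro FinSg" using wsO Omega_fp[OF Fin_all sig] by blast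
    have imp: "implicit_op (fst op) (snd op)" using sig_op[OF sig app(1)] .
    have res_O: "apply_op FinSg op ws \<in> Omega_sigma FinSg \<sigma>"
      unfolding Omega_sigma_def by (rule subalg.app[OF app(1) app(2)]) (use wsO in \<open>auto simp: Omega_sigma_def\<close>)
    have res_f: "apply_op FinSg op ws \<in> free_pro FinSg" by (rule apply_op_fp[OF Fin_all imp app(2) wsf])
    have "apply_op FinSg op ws \<in> pcl FinSg ?T"
    proof (rule pclI[OF res_f])
      fix F :: "(sgr \<times> ('x \<Rightarrow> nat)) set" assume F: "finite F" "\<forall>(S, \<phi>)\<in>F. valid FinSg S \<phi>"
      have "\<forall>p\<in>F. valid FinSg (fst p) (snd p)" using F(2) unfolding ball_pair .
      from directed[OF F(1) this] obtain P and \<psi> :: "'x \<Rightarrow> nat" where P\<psi>: "valid FinSg P \<psi>"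
        "\<forall>p\<in>F. \<exists>h. sg_hom P (fst p) h \<and> h \<circ> \<psi> = snd p" by blast
      have finP: "fin_sgr P" using P\<psi>(1) by (simp add: valid_def FinSg_def)
      have PFin: "P \<in> FinSg" using finP by (simp add: FinSg_def)
      define E where "E = (\<lambda>a. a P \<psi>) ` ?T"
      define xs where "xs = map (\<lambda>w. w P \<psi>) ws"
      have E_sub: "E \<subseteq> carr P" using Tf fp_val P\<psi>(1) unfolding E_def by blast
      have E_closed: "smult P a b \<in> E" if ab0: "a \<in> E" "b \<in> E" for a b
      proof -
        obtain a' b' where ab: "a' \<in> ?T" "b' \<in> ?T" "a = a' P \<psi>" "b = b' P \<psi>"
          using ab0 unfolding E_def by blast
        have "pmult FinSg a' b' \<in> ?T" using splus_closed[OF sig Lf ab(2) ab(1)] .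
        moreover have "pmult FinSg a' b' P \<psi> = smult P a b" using ab P\<psi>(1) by (simp add: pmult_def)
        ultimately show ?thesis unfolding E_def by (metis image_eqI)
      qed
      have xs_E: "set xs \<subseteq> E"
      proof
        fix x assume "x \<in> set xs"
        then obtain w where w: "w \<in> set ws" "x = w P \<psi>" unfolding xs_def by auto
        have "finite {(P, \<psi>)}" "\<forall>(S, \<phi>)\<in>{(P, \<psi>)}. valid FinSg S \<phi>" using P\<psi>(1) by auto
        from pclD[OF _ this] wsT w(1) obtain a where "a \<in> ?T" "a P \<psi> = w P \<psi>" by fastforce
        then show "x \<in> E" unfolding E_def using w(2) by (metis image_eqI)
      qed
      have n0: "fst op \<noteq> 0"
      proof
        assume "fst op = 0"
        then show False using no_nullary imp by metis
      qed
      then have "xs \<noteq> []" using app(2) unfolding xs_def by auto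
      then have Ene: "E \<noteq> {}" using xs_E by (cases xs) auto
      define Es :: sgr where "Es = (E, smult P)"
      have finE: "fin_sgr Es" unfolding fin_sgr_def Es_def carr_def smult_def fst_conv snd_conv
      proof (intro conjI ballI)
        show "finite E" using E_sub fin_finite[OF finP] finite_subset by blast
        show "E \<noteq> {}" using Ene .
      next
        fix a b assume "a \<in> E" "b \<in> E" then show "snd P a b \<in> E" using E_closed by (simp add: smult_def)
      next
        fix a b c assume "a \<in> E" "b \<in> E" "c \<in> E"
        then show "snd P (snd P a b) c = snd P a (snd P b c)"
          using fin_assoc[OF finP] E_sub by (auto simp: smult_def)
      qed
      have homE: "sg_hom Es P id" using E_sub by (simp add: sg_hom_def Es_def carr_def smult_def)
      have lenxs: "length xs = fst op" using app(2) by (simp add: xs_def)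
      have xsE': "set xs \<subseteq> carr Es" using xs_E by (simp add: Es_def carr_def)
      have "snd op Es xs \<in> carr Es" using iop_val[OF imp finE lenxs xsE'] .
      moreover have "id (snd op Es xs) = snd op P (map id xs)" using iop_nat[OF imp finE finP homE lenxs xsE'] .
      ultimately have "snd op P xs \<in> E" by (simp add: Es_def carr_def)
      then obtain a where aP': "snd op P xs = a P \<psi>" and aT: "a \<in> ?T" unfolding E_def by (rule imageE)
      have aP: "a P \<psi> = snd op P xs" using aP' by simp
      have af: "a \<in> free_pro FinSg" using aT Tf by blast
      have xsP: "set xs \<subseteq> carr P" using xs_E E_sub by blast
      have "\<forall>p\<in>F. a (fst p) (snd p) = apply_op FinSg op ws (fst p) (snd p)"
      proof
        fix p assume pF: "p \<in> F"
        obtain h where h: "sg_hom P (fst p) h" "h \<circ> \<psi> = snd p" using P\<psi>(2) pF by blast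
        have vp: "valid FinSg (fst p) (snd p)" using F(2) pF unfolding ball_pair by blast
        have finp: "fin_sgr (fst p)" and pFin: "fst p \<in> FinSg" using vp by (auto simp: valid_def FinSg_def)
        have "a (fst p) (snd p) = a (fst p) (h \<circ> \<psi>)" using h(2) by simp
        also have "\<dots> = h (a P \<psi>)" using fp_nat[OF af P\<psi>(1) pFin h(1)] by simp
        also have "\<dots> = snd op (fst p) (map h xs)" using aP iop_nat[OF imp finP finp h(1) lenxs xsP] by simp
        also have "map h xs = map (\<lambda>w. w (fst p) (snd p)) ws"
        proof -
          have "map h xs = map (\<lambda>w. w (fst p) (h \<circ> \<psi>)) ws"
            unfolding xs_def using wsf fp_nat[OF _ P\<psi>(1) pFin h(1)] by auto
          then show ?thesis using h(2) by simp
        qed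
        also have "snd op (fst p) (map (\<lambda>w. w (fst p) (snd p)) ws) = apply_op FinSg op ws (fst p) (snd p)"
          using vp by (simp add: apply_op_def)
        finally show "a (fst p) (snd p) = apply_op FinSg op ws (fst p) (snd p)" .
      qed
      then show "\<exists>a\<in>?T. \<forall>(S, \<phi>)\<in>F. a S \<phi> = apply_op FinSg op ws S \<phi>"
        using aT unfolding ball_pair by blast
    qed
    then show ?case using res_O unfolding cl_sigma_def by blast
  qed
qed

lemma proj_setmult:
  assumes pv: "pseudovariety V"
  shows "proj V ` setmult FinSg K L = setmult V (proj V ` K) (proj V ` L)"
proof
  show "proj V ` setmult FinSg K L \<subseteq> setmult V (proj V ` K) (proj V ` L)"
  proof
    fix y assume "y \<in> proj V ` setmult FinSg K L"
    then obtain a b where ab: "a \<in> K" "b \<in> L" "y = proj V (pmult FinSg a b)" unfolding setmult_def by blast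
    then have "y = pmult V (proj V a) (proj V b)" by (simp add: proj_pmult[OF pv])
    then show "y \<in> setmult V (proj V ` K) (proj V ` L)" unfolding setmult_def using ab by blast
  qed
next
  show "setmult V (proj V ` K) (proj V ` L) \<subseteq> proj V ` setmult FinSg K L"
  proof
    fix y assume "y \<in> setmult V (proj V ` K) (proj V ` L)"
    then obtain a b where ab: "a \<in> K" "b \<in> L" "y = pmult V (proj V a) (proj V b)" unfolding setmult_def by blast
    then have "y = proj V (pmult FinSg a b)" by (simp add: proj_pmult[OF pv])
    moreover have "pmult FinSg a b \<in> setmult FinSg K L" unfolding setmult_def using ab by blast
    ultimately show "y \<in> proj V ` setmult FinSg K L" by blast
  qed
qed

theorem proposition4p1:
  fixes \<sigma> :: "(nat \<times> (sgr \<Rightarrow> nat list \<Rightarrow> nat)) set"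
    and V :: "sgr set"
    and B :: "('x::finite) pelt set set"
  assumes sig: "implicit_signature \<sigma>"
    and pv: "pseudovariety V"
    and base: "\<forall>K\<in>B. finite K \<and> K \<subseteq> Omega_sigma FinSg \<sigma>"
    and PR: "\<forall>K\<in>rat_closure B. \<forall>L\<in>rat_closure B.
        cl_sigma V \<sigma> (setmult V (proj V ` K) (proj V ` L)) =
          setmult V (cl_sigma V \<sigma> (proj V ` K)) (cl_sigma V \<sigma> (proj V ` L))
      \<and> cl_sigma V \<sigma> (splus V (proj V ` L)) = subalg V \<sigma> (cl_sigma V \<sigma> (proj V ` L))"
  shows "\<forall>L\<in>rat_closure B. proj V ` cl_sigma FinSg \<sigma> L = cl_sigma V \<sigma> (proj V ` L)"
proof -
  have OVf: "Omega_sigma V \<sigma> \<subseteq> (free_pro V :: 'x pelt set)" using Omega_fp[OF pv_all[OF pv] sig] .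
  have OSf: "Omega_sigma FinSg \<sigma> \<subseteq> (free_pro FinSg :: 'x pelt set)" using Omega_fp[OF Fin_all sig] .
  have OP: "proj V ` (Omega_sigma FinSg \<sigma> :: 'x pelt set) \<subseteq> Omega_sigma V \<sigma>" using Omega_proj[OF pv] .
  have key: "L \<subseteq> Omega_sigma FinSg \<sigma> \<and> cl_sigma V \<sigma> (proj V ` L) \<subseteq> proj V ` cl_sigma FinSg \<sigma> L"
    if "L \<in> rat_closure B" for L
    using that
  proof (induction rule: rat_closure.induct)
    case (base K)
    have fK: "finite K" and KO: "K \<subseteq> Omega_sigma FinSg \<sigma>" using base assms(3) by auto
    have pKf: "proj V ` K \<subseteq> free_pro V" using KO OP OVf by blast
    have "cl_sigma V \<sigma> (proj V ` K) \<subseteq> proj V ` K"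
      using pcl_finite[OF finite_imageI[OF fK] pKf] unfolding cl_sigma_def by blast
    moreover have "K \<subseteq> cl_sigma FinSg \<sigma> K"
      using pcl_sub[of K FinSg] KO OSf unfolding cl_sigma_def by blast
    ultimately show ?case using KO by blast
  next
    case (union K L)
    have "cl_sigma V \<sigma> (proj V ` (K \<union> L)) \<subseteq> cl_sigma V \<sigma> (proj V ` K) \<union> cl_sigma V \<sigma> (proj V ` L)"
      using pcl_Un[of V "proj V ` K" "proj V ` L"] unfolding cl_sigma_def image_Un by blast
    moreover have "cl_sigma FinSg \<sigma> K \<subseteq> cl_sigma FinSg \<sigma> (K \<union> L)" "cl_sigma FinSg \<sigma> L \<subseteq> cl_sigma FinSg \<sigma> (K \<union> L)"
      using cl_mono[of K "K \<union> L" FinSg \<sigma>] cl_mono[of L "K \<union> L" FinSg \<sigma>] by blast+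
    ultimately show ?case using union.IH by blast
  next
    case (prod K L)
    have KO: "K \<subseteq> Omega_sigma FinSg \<sigma>" and LO: "L \<subseteq> Omega_sigma FinSg \<sigma>" using prod.IH by auto
    have MO: "setmult FinSg K L \<subseteq> Omega_sigma FinSg \<sigma>"
      unfolding setmult_def using KO LO pmult_Omega[OF Fin_all sig] by blast
    have "cl_sigma V \<sigma> (proj V ` setmult FinSg K L)
        = setmult V (cl_sigma V \<sigma> (proj V ` K)) (cl_sigma V \<sigma> (proj V ` L))"
      using PR prod.hyps by (simp add: proj_setmult[OF pv])
    also have "\<dots> \<subseteq> proj V ` cl_sigma FinSg \<sigma> (setmult FinSg K L)"
    proof
      fix y assume "y \<in> setmult V (cl_sigma V \<sigma> (proj V ` K)) (cl_sigma V \<sigma> (proj V ` L))"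
      then obtain c d where cd: "c \<in> cl_sigma V \<sigma> (proj V ` K)" "d \<in> cl_sigma V \<sigma> (proj V ` L)"
        "y = pmult V c d" unfolding setmult_def by blast
      then obtain c' d' where cd': "c' \<in> cl_sigma FinSg \<sigma> K" "d' \<in> cl_sigma FinSg \<sigma> L"
        "c = proj V c'" "d = proj V d'" using prod.IH by blast
      have "pmult FinSg c' d' \<in> pcl FinSg (setmult FinSg K L)"
        using pcl_mult[OF sig] cd'(1,2) unfolding cl_sigma_def by blast
      moreover have "pmult FinSg c' d' \<in> Omega_sigma FinSg \<sigma>"
        using pmult_Omega[OF Fin_all sig] cd'(1,2) unfolding cl_sigma_def by blast
      moreover have "y = proj V (pmult FinSg c' d')" using cd(3) cd'(3,4) by (simp add: proj_pmult[OF pv])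
      ultimately show "y \<in> proj V ` cl_sigma FinSg \<sigma> (setmult FinSg K L)" unfolding cl_sigma_def by blast
    qed
    finally show ?case using MO by blast
  next
    case (plus L)
    have LO: "L \<subseteq> Omega_sigma FinSg \<sigma>" using plus.IH by auto
    have "cl_sigma V \<sigma> (proj V ` splus FinSg L) = subalg V \<sigma> (cl_sigma V \<sigma> (proj V ` L))"
      using PR plus.hyps by (simp add: splus_proj[OF pv])
    also have "\<dots> \<subseteq> subalg V \<sigma> (proj V ` cl_sigma FinSg \<sigma> L)"
      using subalg_mono plus.IH by blast
    also have "\<dots> \<subseteq> proj V ` subalg FinSg \<sigma> (cl_sigma FinSg \<sigma> L)"
      using subalg_proj[OF pv] .
    also have "\<dots> \<subseteq> proj V ` cl_sigma FinSg \<sigma> (splus FinSg L)"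
      using plus_cl[OF sig LO] by blast
    finally show ?case using splus_Omega[OF sig LO] by blast
  qed
  show ?thesis
  proof
    fix L assume "L \<in> rat_closure B"
    then show "proj V ` cl_sigma FinSg \<sigma> L = cl_sigma V \<sigma> (proj V ` L)"
      using key cl_proj_sub[OF pv] by blast
  qed
qed

end
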